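(* For each integer $m\ge 2$ let $N_m=p_1p_2\cdots p_m$ be the product of the first $m$ primes (so $N_m\ge 6$), and let $H_m=\{0,N_m,2N_m,\dots,(m-1)N_m\}$. Then $\mathfrak{S}(H_m)\to\infty$ as $m\to\infty$.
   Context: For a finite set $H$ of $m$ integers, $\nu_p(H)$ denotes the number of distinct residues modulo $p$ among the elements of $H$. The Selberg (singular series) constant is $$\mathfrak{S}(H)=\prod_{p}\Big(1-\frac{\nu_p(H)}{p}\Big)\Big(1-\frac1p\Big)^{-m},$$ where the product runs over all primes $p$. *)

theory Defs
  imports "HOL-Analysis.Analysis" "HOL-Computational_Algebra.Primes"
begin

definition nu :: "nat \<Rightarrow> int set \<Rightarrow> nat" where
  "nu p H = card ((\<lambda>h. h mod int p) ` H)"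

definition singular_series :: "int set \<Rightarrow> real" where
  "singular_series H =
     prodinf (\<lambda>p::nat. if prime p
        then (1 - real (nu p H) / real p) / (1 - 1 / real p) ^ card H
        else 1)"

text \<open>The i-th prime, 0-indexed: nth_prime 0 = 2.\<close>
definition nth_prime :: "nat \<Rightarrow> nat" where
  "nth_prime i = enumerate {p::nat. prime p} i"

definition primorial_first :: "nat \<Rightarrow> nat" where
  "primorial_first m = (\<Prod>i<m. nth_prime i)"

definition Hm :: "nat \<Rightarrow> int set" where
  "Hm m = (\<lambda>j. int j * int (primorial_first m)) ` {..<m}"

end

theory Submission
  imports Defs
begin

lemma np_prime: "prime (nth_prime i)"
  unfolding nth_prime_def using enumerate_in_set[OF primes_infinite] by auto

lemma np_mono: "i < j \<Longrightarrow> nth_prime i < nth_prime j"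
  unfolding nth_prime_def using enumerate_mono[OF _ primes_infinite] by auto

lemma np_0: "nth_prime 0 = 2"
  unfolding nth_prime_def enumerate_0
  by (rule Least_equality) (auto simp: prime_ge_2_nat)

lemma np_1: "nth_prime 1 = 3"
proof -
  have "nth_prime 1 = enumerate ({p::nat. prime p} - {2}) 0"
    unfolding nth_prime_def using np_0 by (simp add: nth_prime_def enumerate_Suc')
  also have "\<dots> = 3" unfolding enumerate_0
  proof (rule Least_equality)
    show "3 \<in> {p::nat. prime p} - {2}" by simp
    fix y :: nat assume "y \<in> {p. prime p} - {2}"
    then have "prime y" "y \<noteq> 2" by auto
    then show "3 \<le> y" using prime_ge_2_nat[of y] by presburger
  qed
  finally show ?thesis .
qed

lemma np_ge: "i \<ge> 1 \<Longrightarrow> nth_prime i \<ge> 2*i+1"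
proof (induction i rule: dec_induct)
  case base then show ?case using np_1 by simp
next
  case (step n)
  have "nth_prime (Suc n) > nth_prime n" by (rule np_mono) simp
  moreover have "odd (nth_prime (Suc n))"
  proof -
    have "nth_prime (Suc n) > 2" using np_mono[of 0 "Suc n"] np_0 by simp
    then show ?thesis using np_prime[of "Suc n"] prime_odd_nat by blast
  qed
  ultimately show ?case using step.IH by presburger
qed

lemma np_ex: "prime p \<Longrightarrow> \<exists>i. nth_prime i = p"
  unfolding nth_prime_def using enumerate_Ex[OF primes_infinite] by auto

lemma np_dvd: "i < m \<Longrightarrow> nth_prime i dvd primorial_first m"
  unfolding primorial_first_def by (rule dvd_prodI) auto

lemma primorial_pos: "primorial_first m > 0"
  unfolding primorial_first_def using np_prime prime_gt_0_nat by (simp add: prod_pos)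

lemma prime_ndvd_large:
  assumes "prime p" "\<not> p dvd primorial_first m" "m \<ge> 1"
  shows "p \<ge> 2*m+1"
proof -
  obtain i where i: "nth_prime i = p" using np_ex assms(1) by blast
  have "i \<ge> m" using np_dvd[of i m] assms(2) i by (cases "i < m") auto
  then show ?thesis using np_ge[of i] i assms(3) by simp
qed

lemma card_Hm: "card (Hm m) = m"
proof -
  have "inj_on (\<lambda>j. int j * int (primorial_first m)) {..<m}"
    using primorial_pos[of m] by (auto simp: inj_on_def)
  then show ?thesis unfolding Hm_def by (simp add: card_image)
qed

lemma nu_dvd:
  assumes "p dvd primorial_first m" "m \<ge> 1"
  shows "nu p (Hm m) = 1"
proof -
  have z: "int j * int (primorial_first m) mod int p = 0" for j
  proof -
    have "int p dvd int (primorial_first m)" using assms(1) by simp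
    then have "int p dvd int j * int (primorial_first m)" by (rule dvd_mult)
    then show ?thesis by simp
  qed
  have h0: "0 \<in> Hm m" unfolding Hm_def using assms(2) by (auto intro!: image_eqI[of 0 _ 0])
  have "(\<lambda>h. h mod int p) ` Hm m = {0}"
  proof (intro equalityI subsetI)
    fix x assume "x \<in> (\<lambda>h. h mod int p) ` Hm m"
    then show "x \<in> {0}" unfolding Hm_def using z by auto
  next
    fix x :: int assume "x \<in> {0}"
    then show "x \<in> (\<lambda>h. h mod int p) ` Hm m" using h0 by (auto intro!: image_eqI[of 0 _ 0])
  qed
  then show ?thesis unfolding nu_def by simp
qed

lemma nu_ndvd:
  assumes "prime p" "\<not> p dvd primorial_first m" "m \<le> p"
  shows "nu p (Hm m) = m"
proof -
  let ?N = "int (primorial_first m)"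
  have "inj_on (\<lambda>h. h mod int p) (Hm m)"
  proof (rule inj_onI)
    fix x y assume x: "x \<in> Hm m" and y: "y \<in> Hm m" and e: "x mod int p = y mod int p"
    obtain i where i: "i < m" "x = int i * ?N" using x unfolding Hm_def by auto
    obtain j where j: "j < m" "y = int j * ?N" using y unfolding Hm_def by auto
    have "int p dvd x - y" using e by (simp add: mod_eq_dvd_iff)
    moreover have "x - y = (int i - int j) * ?N" using i j by (simp add: left_diff_distrib)
    ultimately have d1: "int p dvd (int i - int j) * ?N" by simp
    have "prime (int p)" using assms(1) by simp
    moreover have "\<not> int p dvd ?N" using assms(2) by simp
    ultimately have d: "int p dvd (int i - int j)" using d1 prime_dvd_mult_iff by blast
    have lt: "\<bar>int i - int j\<bar> < int p" using i j assms(3) by auto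
    have "int i - int j = 0"
    proof (rule ccontr)
      assume "int i - int j \<noteq> 0"
      then have "\<bar>int p\<bar> \<le> \<bar>int i - int j\<bar>" using dvd_imp_le_int d by blast
      then show False using lt by simp
    qed
    then show "x = y" using i j by simp
  qed
  then show ?thesis unfolding nu_def by (simp add: card_image card_Hm)
qed

lemma tfac:
  fixes q :: real and m :: nat
  assumes q: "q \<ge> 2*m+1" and m: "m \<ge> 1"
  shows "0 < (1 - m/q)/(1-1/q)^m" "(1 - m/q)/(1-1/q)^m \<le> 1"
        "exp (-2 * (real m)^2 / q^2) \<le> (1 - m/q)/(1-1/q)^m"
proof -
  have q1: "q > 1" using q m by simp
  have mq: "m/q < 1/2" using q q1 by (simp add: field_simps)
  have d0: "(1-1/q)^m > 0" using q1 by simp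
  have n0: "1 - m/q > 0" using mq by linarith
  show "0 < (1 - m/q)/(1-1/q)^m" using d0 n0 by simp
  have "1 + real m * (-1/q) \<le> (1 + (-1/q))^m"
    by (rule Bernoulli_inequality) (use q1 in simp)
  then have "1 - m/q \<le> (1-1/q)^m" by simp
  then show "(1 - m/q)/(1-1/q)^m \<le> 1" using d0 by simp
  have qq: "1/(q-1) > 0" using q1 by simp
  have "1 + real m * (1/(q-1)) \<le> (1 + 1/(q-1))^m"
    by (rule Bernoulli_inequality) (use qq in linarith)
  moreover have "1 + 1/(q-1) = 1/(1-1/q)" using q1 by (simp add: field_simps)
  ultimately have "1 + m/(q-1) \<le> 1/(1-1/q)^m" by (simp add: power_divide)
  moreover have "1 + m/q \<le> 1 + m/(q-1)" using q1 by (simp add: frac_le)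
  ultimately have B: "1 + m/q \<le> 1/(1-1/q)^m" by linarith
  have "(1 - m/q) * (1 + m/q) \<le> (1 - m/q) * (1/(1-1/q)^m)"
    using B n0 by (intro mult_left_mono) auto
  then have C: "1 - (m/q)^2 \<le> (1 - m/q)/(1-1/q)^m" by (simp add: power2_eq_square algebra_simps)
  define y where "y = (m/q)^2"
  have mq0: "0 \<le> m/q" using q1 by simp
  have y0: "0 \<le> y" unfolding y_def by simp
  have "(m/q)^2 \<le> (1/2)^2" using mq mq0 by (intro power_mono) auto
  then have y1: "y \<le> 1/4" unfolding y_def by (simp add: power2_eq_square)
  have "-y - 2*y^2 \<le> ln (1 - y)" by (rule ln_one_minus_pos_lower_bound) (use y0 y1 in auto)
  moreover have "-2*y \<le> -y - 2*y^2" proof -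
    have "y*y \<le> y*(1/4)" using y0 y1 by (intro mult_left_mono) auto
    then show ?thesis using y0 by (simp add: power2_eq_square)
  qed
  ultimately have "exp (-2*y) \<le> exp (ln (1-y))" by simp
  also have "\<dots> = 1 - y" using y1 by simp
  finally have "exp (-2*y) \<le> 1 - y" .
  moreover have "-2*y = -2 * (real m)^2 / q^2" unfolding y_def by (simp add: power_divide)
  ultimately show "exp (-2 * (real m)^2 / q^2) \<le> (1 - m/q)/(1-1/q)^m" using C unfolding y_def by simp
qed

lemma series_lower:
  assumes m: "m \<ge> 2"
  shows "singular_series (Hm m) \<ge> 3^(m-1) * exp (- real m)"
proof -
  define N where "N = primorial_first m"
  have N0: "N > 0" unfolding N_def by (rule primorial_pos)
  have d2: "2 dvd N" unfolding N_def using np_dvd[of 0 m] np_0 m by simp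
  have d3: "3 dvd N" unfolding N_def using np_dvd[of 1 m] np_1 m by simp
  define h where "h p = (if prime p \<and> p dvd N then (1 - 1/real p)/(1 - 1/real p)^m else 1)" for p :: nat
  define t where "t p = (if prime p \<and> \<not> p dvd N then (1 - real m/real p)/(1 - 1/real p)^m else 1)" for p :: nat
  have large: "p \<ge> 2*m+1" if "prime p" "\<not> p dvd N" for p
    using prime_ndvd_large[of p m] that m unfolding N_def by simp
  have eq: "singular_series (Hm m) = prodinf (\<lambda>p. h p * t p)"
    unfolding singular_series_def
  proof (rule prodinf_cong)
    fix p :: nat
    show "(if prime p then (1 - real (nu p (Hm m)) / real p) / (1 - 1 / real p) ^ card (Hm m) else 1)
          = h p * t p"
    proof (cases "prime p")
      case True
      show ?thesis
      proof (cases "p dvd N")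
        case True
        then show ?thesis using \<open>prime p\<close> nu_dvd[of p m] m unfolding h_def t_def N_def
          by (simp add: card_Hm)
      next
        case False
        then have "nu p (Hm m) = m" using nu_ndvd[of p m] \<open>prime p\<close> large[of p] unfolding N_def by simp
        then show ?thesis using \<open>prime p\<close> False unfolding h_def t_def by (simp add: card_Hm)
      qed
    qed (simp add: h_def t_def)
  qed
  have t_pos: "t p > 0" and t_le1: "t p \<le> 1" for p
    using tfac[of m "real p"] large[of p] m unfolding t_def by auto
  have t_low: "t p \<ge> exp (-2 * (real m)^2 / (real p)^2)" if "p \<ge> 2*m+1" for p
  proof (cases "prime p \<and> \<not> p dvd N")
    case True
    have "exp (-2 * (real m)^2 / (real p)^2) \<le> (1 - m/real p)/(1-1/real p)^m"
      by (rule tfac(3)[where q="real p" and m=m]) (use that m in auto)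
    then show ?thesis using True unfolding t_def by simp
  next
    case False
    then have "t p = 1" unfolding t_def by auto
    moreover have "-2 * (real m)^2 / (real p)^2 \<le> 0" by (simp add: divide_nonpos_nonneg)
    ultimately show ?thesis by simp
  qed
  have t_one: "t p = 1" if "p < 2*m+1" for p
    using large[of p] that unfolding t_def by force
  have base: "(\<Prod>i<2*m+1. t i) = 1" using t_one by simp
  have step: "(\<Prod>i<2*m+1+k. t i) \<ge> exp (- real m + 2 * (real m)^2 / (2*m+k))" for k
  proof (induction k)
    case 0
    have "exp (- real m + 2 * (real m)^2 / (2*m+0)) = 1" using m by (simp add: power2_eq_square)
    then show ?case using base by simp
  next
    case (Suc k)
    define n where "n = 2*m+1+k"
    have np: "real n > 0" "real n - 1 = 2*m+k" unfolding n_def by auto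
    have "1/(real n - 1) - 1/(real n)^2 \<ge> 1/real n"
    proof -
      have "1/(real n - 1) - 1/real n = 1/((real n - 1)*real n)" using np m
        by (simp add: field_simps)
      also have "\<dots> \<ge> 1/(real n * real n)" using np m
        by (intro divide_left_mono mult_right_mono) auto
      finally show ?thesis by (simp add: power2_eq_square)
    qed
    then have ineq: "- real m + 2 * (real m)^2 / (2*m+k) - 2 * (real m)^2 / (real n)^2
        \<ge> - real m + 2 * (real m)^2 / (2*m + Suc k)"
    proof -
      assume a: "1/(real n - 1) - 1/(real n)^2 \<ge> 1/real n"
      have "2 * (real m)^2 * (1/(real n - 1) - 1/(real n)^2) \<ge> 2 * (real m)^2 * (1/real n)"
        using a by (intro mult_left_mono) auto
      then show ?thesis using np unfolding n_def by (simp add: field_simps)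
    qed
    have "(\<Prod>i<2*m+1+Suc k. t i) = (\<Prod>i<2*m+1+k. t i) * t n"
      unfolding n_def by simp
    also have "\<dots> \<ge> exp (- real m + 2 * (real m)^2 / (2*m+k)) * exp (-2 * (real m)^2 / (real n)^2)"
    proof -
      have P0: "0 \<le> (\<Prod>i<2*m+1+k. t i)" by (rule prod_nonneg) (use t_pos less_imp_le in blast)
      have tl: "exp (-2 * (real m)^2 / (real n)^2) \<le> t n" by (rule t_low) (simp add: n_def)
      show ?thesis by (rule mult_mono[OF Suc.IH tl P0]) simp
    qed
    finally have "(\<Prod>i<2*m+1+Suc k. t i) \<ge> exp (- real m + 2 * (real m)^2 / (2*m+k) - 2 * (real m)^2 / (real n)^2)"
      by (simp add: exp_add[symmetric])
    moreover have "exp (- real m + 2 * (real m)^2 / (2*m + Suc k)) \<le>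
        exp (- real m + 2 * (real m)^2 / (2*m+k) - 2 * (real m)^2 / (real n)^2)"
      using ineq by simp
    ultimately show ?case by linarith
  qed
  have mono_prod: "(\<Prod>i<j+d. t i) \<le> (\<Prod>i<j. t i)" for j d
  proof (induction d)
    case (Suc d)
    have "(\<Prod>i<j+Suc d. t i) = (\<Prod>i<j+d. t i) * t (j+d)" by simp
    also have "\<dots> \<le> (\<Prod>i<j+d. t i)"
      using t_le1[of "j+d"] by (intro mult_left_le) (auto intro: prod_nonneg less_imp_le[OF t_pos])
    finally show ?case using Suc.IH by linarith
  qed simp
  have Pbound: "(\<Prod>i\<le>n. t i) \<ge> exp (- real m)" for n
  proof -
    have "(\<Prod>i\<le>n. t i) = (\<Prod>i<Suc n. t i)" using lessThan_Suc_atMost by simp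
    also have "\<dots> \<ge> (\<Prod>i<Suc n + (2*m+1). t i)" by (rule mono_prod)
    also have "(\<Prod>i<Suc n + (2*m+1). t i) = (\<Prod>i<2*m+1+Suc n. t i)" by (simp add: add.commute)
    also have "\<dots> \<ge> exp (- real m + 2 * (real m)^2 / (2*m+Suc n))" by (rule step)
    also have "exp (- real m + 2 * (real m)^2 / (2*m+Suc n)) \<ge> exp (- real m)" by simp
    finally show ?thesis by linarith
  qed
  have dec: "decseq (\<lambda>n. \<Prod>i\<le>n. t i)"
  proof (rule decseq_SucI)
    fix n
    have "(\<Prod>i\<le>Suc n. t i) = (\<Prod>i\<le>n. t i) * t (Suc n)" by simp
    also have "\<dots> \<le> (\<Prod>i\<le>n. t i)"
      using t_le1[of "Suc n"] by (intro mult_left_le) (auto intro: prod_nonneg less_imp_le[OF t_pos])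
    finally show "(\<Prod>i\<le>Suc n. t i) \<le> (\<Prod>i\<le>n. t i)" .
  qed
  obtain L where L: "(\<lambda>n. \<Prod>i\<le>n. t i) \<longlonglongrightarrow> L"
    using decseq_convergent[OF dec, of "exp (- real m)"] Pbound by blast
  have Lge: "L \<ge> exp (- real m)"
    by (rule LIMSEQ_le_const[OF L]) (use Pbound in auto)
  then have L0: "L \<noteq> 0" by (metis exp_gt_zero not_le order_refl)
  have ct: "convergent_prod t"
    using convergent_prod_iff_nz_lim[of t] t_pos L L0 by (metis less_irrefl)
  have pt: "prodinf t = L" by (rule prodinf_eq_prod_lim[OF L L0])
  have h1: "h p = 1" if "p \<notin> {..N}" for p
    using that N0 dvd_imp_le[of p N] unfolding h_def by auto
  have ch: "convergent_prod h" by (rule convergent_prod_finite[of "{..N}"]) (use h1 in auto)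
  have ph: "prodinf h = (\<Prod>p\<in>{..N}. h p)" by (rule prodinf_finite) (use h1 in auto)
  have hge1: "h p \<ge> 1" for p
  proof (cases "prime p \<and> p dvd N")
    case True
    then have p1: "real p > 1" using prime_gt_1_nat by auto
    have "(1 - 1/real p)/(1 - 1/real p)^m = 1/(1 - 1/real p)^(m-1)"
      using p1 m by (cases m) (auto simp: field_simps)
    moreover have "(1 - 1/real p)^(m-1) \<le> 1" "(1 - 1/real p)^(m-1) > 0" using p1
      by (auto intro: power_le_one)
    ultimately show ?thesis using True unfolding h_def by simp
  qed (auto simp: h_def)
  have h2: "h 2 = 2^(m-1)"
  proof -
    have "h 2 = (1/2)/(1/2)^m" using d2 unfolding h_def by simp
    also have "\<dots> = 2^(m-1)" using m by (cases m) (auto simp: field_simps)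
    finally show ?thesis .
  qed
  have h3: "h 3 = (3/2)^(m-1)"
  proof -
    have "h 3 = (2/3)/(2/3)^m" using d3 unfolding h_def by simp
    also have "\<dots> = (3/2)^(m-1)" using m by (cases m) (auto simp: field_simps power_divide)
    finally show ?thesis .
  qed
  have "(\<Prod>p\<in>{..N}. h p) = (\<Prod>p\<in>{2,3}. h p) * (\<Prod>p\<in>{..N}-{2,3}. h p)"
    using dvd_imp_le[OF d2 N0] dvd_imp_le[OF d3 N0]
    by (subst prod.subset_diff[of "{2,3}"]) auto
  also have "\<dots> \<ge> (\<Prod>p\<in>{2,3}. h p) * 1"
  proof -
    have "0 \<le> h 2" "0 \<le> h 3" using hge1[of 2] hge1[of 3] by linarith+
    then show ?thesis using hge1 by (intro mult_left_mono prod_ge_1) auto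
  qed
  finally have hb: "prodinf h \<ge> 3^(m-1)" using h2 h3 ph
    by (simp add: power_mult_distrib[symmetric])
  have "singular_series (Hm m) = prodinf h * prodinf t"
    using eq prodinf_mult[OF ch ct] by simp
  also have "\<dots> \<ge> 3^(m-1) * exp (- real m)"
  proof -
    have "(0::real) \<le> 3^(m-1)" by simp
    then have "0 \<le> prodinf h" using hb by linarith
    then show ?thesis using hb Lge pt by (intro mult_mono) auto
  qed
  finally show ?thesis .
qed

theorem mainTheorem2:
  shows "filterlim (\<lambda>m. singular_series (Hm m)) at_top sequentially"
proof -
  have lim: "filterlim (\<lambda>m::nat. 3^(m-1) * exp (- real m) :: real) at_top sequentially"
  proof -
    define c :: real where "c = 3 / exp 1"
    have c1: "c > 1" unfolding c_def using e_less_272 by simp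
    have e: "eventually (\<lambda>m::nat. (1/3) * c^m = 3^(m-1) * exp (- real m)) sequentially"
      using eventually_ge_at_top[of 1]
    proof eventually_elim
      case (elim m)
      have "exp (- real m) = inverse (exp 1) ^ m"
        by (metis exp_minus exp_of_nat_mult mult.right_neutral power_inverse)
      moreover have "(3::real)^m = 3 * 3^(m-1)" using elim by (cases m) auto
      ultimately show ?case unfolding c_def by (simp add: power_divide field_simps)
    qed
    have "filterlim (\<lambda>m::nat. c^m) at_top sequentially"
      by (rule filterlim_at_infinity_imp_filterlim_at_top[OF filterlim_realpow_sequentially_gt1])
         (use c1 in auto)
    then have "filterlim (\<lambda>m::nat. (1/3) * c^m) at_top sequentially"
      by (intro filterlim_tendsto_pos_mult_at_top[OF tendsto_const]) auto
    then show ?thesis using filterlim_cong[OF refl refl e] by simp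
  qed
  have ev: "eventually (\<lambda>m. 3^(m-1) * exp (- real m) \<le> singular_series (Hm m)) sequentially"
    using eventually_ge_at_top[of 2] by eventually_elim (rule series_lower)
  show ?thesis by (rule filterlim_at_top_mono[OF lim ev])
qed

end
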